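(* Let $T$ be an operator function on an interval $\Delta$ satisfying (A1)–(A3) and (VM). Let $\mu_1,\mu_2\in\Delta$ with $\mu_1<\mu_2$, and let $\varepsilon,\delta>0$ be such that for all $\lambda\in[\mu_1,\mu_2]$ and $x\in\mathcal D$: $|\mathfrak t(\lambda)[x]|\le\varepsilon\|x\|^2\Rightarrow\mathfrak t'(\lambda)[x]\le-\delta\|x\|^2$. Let $a,b>0$, set $c:=\min\{\varepsilon,\delta(\mu_2-\mu_1)\}$ and suppose $ac>b(a+b+3c)$. If $u\in\mathcal D$ and $v\in\mathrm{dom}(T(\mu_2))$ satisfy $\mathfrak t(\mu_2)[u]\ge a\|u\|^2$ and $\|T(\mu_2)v\|\le b\|v\|$, and $u\ne0$ or $v\ne0$, then $\mathfrak t(\mu_1)[u+v]>0$.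
   Context: For a self-adjoint operator $A$ with spectral measure $E$, its form is $\mathfrak a[x,y]=\int_{\mathbb R}\mu\,d\langle E(\mu)x,y\rangle$ on $\mathrm{dom}(|A|^{1/2})$, $\mathfrak a[x]:=\mathfrak a[x,x]$. (A1) $T(\lambda)$ self-adjoint for each $\lambda\in\Delta$, with form $\mathfrak t(\lambda)$; (A2) $\mathrm{dom}\,\mathfrak t(\lambda)=:\mathcal D$ independent of $\lambda$; (A3) for each $x\in\mathcal D\setminus\{0\}$, $\lambda\mapsto\mathfrak t(\lambda)[x]$ is continuous, and if $\mathfrak t(\lambda_0)[x]=0$ then $\mathfrak t(\lambda)[x]>0$ for $\lambda<\lambda_0$ and $<0$ for $\lambda>\lambda_0$ ($\lambda\in\Delta$). (VM): for every $u\in\mathcal D$, $\mathfrak t(\cdot)[u]$ is differentiable on $\Delta$ with derivative $\mathfrak t'(\cdot)[u]$, and for every compact subinterval $I\subset\Delta$ there are $\varepsilon,\delta>0$ with: $x\in\mathcal D$, $\|x\|=1$, $\lambda\in I$, $|\mathfrak t(\lambda)[x]|\le\varepsilon$ imply $\mathfrak t'(\lambda)[x]\le-\delta$. *)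

theory Defs
  imports "HOL-Analysis.Analysis"
begin

text \<open>A complex Hilbert space is a type of class
complex_inner and complete_space.\<close>

class complex_inner = real_normed_vector +
  fixes scaleC :: "complex \<Rightarrow> 'a \<Rightarrow> 'a" (infixr \<open>*\<^sub>C\<close> 75)
    and cinner :: "'a \<Rightarrow> 'a \<Rightarrow> complex"
  assumes scaleC_add_right: "a *\<^sub>C (x + y) = a *\<^sub>C x + a *\<^sub>C y"
    and scaleC_add_left: "(a + b) *\<^sub>C x = a *\<^sub>C x + b *\<^sub>C x"
    and scaleC_scaleC: "a *\<^sub>C (b *\<^sub>C x) = (a * b) *\<^sub>C x"
    and scaleC_one: "1 *\<^sub>C x = x"
    and scaleR_scaleC: "scaleR r x = complex_of_real r *\<^sub>C x"
    and cinner_commute: "cinner x y = cnj (cinner y x)"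
    and cinner_add_left: "cinner (x + y) z = cinner x z + cinner y z"
    and cinner_scaleC_left: "cinner (a *\<^sub>C x) y = a * cinner x y"
    and cinner_ge_zero: "0 \<le> Re (cinner x x)"
    and cinner_eq_zero_iff: "cinner x x = 0 \<longleftrightarrow> x = 0"
    and norm_eq_sqrt_cinner: "norm x = sqrt (Re (cinner x x))"


instantiation complex :: complex_inner
begin
definition scaleC_complex :: "complex \<Rightarrow> complex \<Rightarrow> complex" where "scaleC_complex a x = a * x"
definition cinner_complex :: "complex \<Rightarrow> complex \<Rightarrow> complex" where "cinner_complex x y = x * cnj y"
instance proof
  fix a b :: complex and x y z :: complex and r :: real
  show "a *\<^sub>C (x + y) = a *\<^sub>C x + a *\<^sub>C y" by (simp add: scaleC_complex_def distrib_left)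
  show "(a + b) *\<^sub>C x = a *\<^sub>C x + b *\<^sub>C x" by (simp add: scaleC_complex_def distrib_right)
  show "a *\<^sub>C (b *\<^sub>C x) = (a * b) *\<^sub>C x" by (simp add: scaleC_complex_def)
  show "1 *\<^sub>C x = x" by (simp add: scaleC_complex_def)
  show "scaleR r x = complex_of_real r *\<^sub>C x" by (simp add: scaleC_complex_def scaleR_conv_of_real)
  show "cinner x y = cnj (cinner y x)" by (simp add: cinner_complex_def mult.commute)
  show "cinner (x + y) z = cinner x z + cinner y z" by (simp add: cinner_complex_def distrib_right)
  show "cinner (a *\<^sub>C x) y = a * cinner x y" by (simp add: cinner_complex_def scaleC_complex_def)
  show "0 \<le> Re (cinner x x)" by (simp add: cinner_complex_def complex_mult_cnj)
  show "cinner x x = 0 \<longleftrightarrow> x = 0" by (simp add: cinner_complex_def)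
  show "norm x = sqrt (Re (cinner x x))" by (simp add: cinner_complex_def complex_mult_cnj cmod_def)
qed
end

definition clinear_map :: "('a::complex_inner \<Rightarrow> 'a) \<Rightarrow> bool" where
  "clinear_map f \<longleftrightarrow> (\<forall>x y. f (x + y) = f x + f y) \<and> (\<forall>c x. f (c *\<^sub>C x) = c *\<^sub>C f x)"

definition spectral_measure :: "(real set \<Rightarrow> 'a::complex_inner \<Rightarrow> 'a) \<Rightarrow> bool" where
  "spectral_measure E \<longleftrightarrow>
     (\<forall>B\<in>sets borel. clinear_map (E B) \<and> (\<forall>x. E B (E B x) = E B x)
        \<and> (\<forall>x y. cinner (E B x) y = cinner x (E B y)))
   \<and> (\<forall>x. E UNIV x = x)
   \<and> (\<forall>B\<in>sets borel. \<forall>C\<in>sets borel. \<forall>x. E (B \<inter> C) x = E B (E C x))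
   \<and> (\<forall>F. range F \<subseteq> sets borel \<longrightarrow> disjoint_family F \<longrightarrow>
        (\<forall>x. (\<lambda>n. \<Sum>k<n. E (F k) x) \<longlonglongrightarrow> E (\<Union>(range F)) x))"

definition spectral_dist :: "(real set \<Rightarrow> 'a::complex_inner \<Rightarrow> 'a) \<Rightarrow> 'a \<Rightarrow> real measure" where
  "spectral_dist E x = measure_of UNIV (sets borel) (\<lambda>B. ennreal ((norm (E B x))\<^sup>2))"

text \<open>Form of the self-adjoint operator with spectral measure E:
a[x] = \<integral> \<mu> d\<langle>E(\<mu>)x,x\<rangle> on dom(|A|^(1/2)) = {x. \<integral> |\<mu>| d\<langle>E(\<mu>)x,x\<rangle> < \<infinity>}.\<close>

definition spectral_form_dom :: "(real set \<Rightarrow> 'a::complex_inner \<Rightarrow> 'a) \<Rightarrow> 'a set" where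
  "spectral_form_dom E = {x. integrable (spectral_dist E x) (\<lambda>\<mu>. \<mu>)}"

definition spectral_form :: "(real set \<Rightarrow> 'a::complex_inner \<Rightarrow> 'a) \<Rightarrow> 'a \<Rightarrow> real" where
  "spectral_form E x = (\<integral>\<mu>. \<mu> \<partial>spectral_dist E x)"

text \<open>The operator A = \<integral> \<mu> dE(\<mu>): its domain is {x. \<integral> \<mu>^2 d\<langle>E(\<mu>)x,x\<rangle> < \<infinity>}, and
for x, y in the domain \<langle>Ax,y\<rangle> = \<integral> \<mu> d\<langle>E(\<mu>)x,y\<rangle>, the latter written by polarization.
Since the domain is dense, this determines A on its domain; values of A outside the
domain are irrelevant. (domA, A) represents a self-adjoint operator, and by the
spectral theorem every self-adjoint operator arises this way.\<close>

definition spectral_op_dom :: "(real set \<Rightarrow> 'a::complex_inner \<Rightarrow> 'a) \<Rightarrow> 'a set" where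
  "spectral_op_dom E = {x. (\<integral>\<^sup>+\<mu>. ennreal (\<mu>\<^sup>2) \<partial>spectral_dist E x) < \<infinity>}"

definition spectral_operator ::
  "(real set \<Rightarrow> 'a::complex_inner \<Rightarrow> 'a) \<Rightarrow> 'a set \<Rightarrow> ('a \<Rightarrow> 'a) \<Rightarrow> bool" where
  "spectral_operator E domA A \<longleftrightarrow> spectral_measure E \<and> domA = spectral_op_dom E \<and>
     (\<forall>x\<in>domA. \<forall>y\<in>domA.
        cinner (A x) y = (\<Sum>k<4::nat. \<i> ^ k * complex_of_real (spectral_form E (x + (\<i> ^ k) *\<^sub>C y))) / 4)"

end

theory Submission
  imports Defs
begin



lemma cinner_add_right: "cinner x (y + z) = cinner x y + cinner x (z::'a::complex_inner)"
  by (metis cinner_commute cinner_add_left complex_cnj_add)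

lemma cinner_zero_left[simp]: "cinner 0 (y::'a::complex_inner) = 0"
  using cinner_add_left[of 0 0 y] by simp

lemma cinner_zero_right[simp]: "cinner y (0::'a::complex_inner) = 0"
  by (metis cinner_commute cinner_zero_left complex_cnj_zero)

lemma cinner_scaleR_left: "cinner (scaleR r x) (y::'a::complex_inner) = complex_of_real r * cinner x y"
  by (simp add: scaleR_scaleC cinner_scaleC_left)

lemma cinner_minus_left: "cinner (- x) (y::'a::complex_inner) = - cinner x y"
  using cinner_scaleR_left[of "-1" x y] by simp

lemma cinner_diff_left: "cinner (x - z) (y::'a::complex_inner) = cinner x y - cinner z y"
  using cinner_add_left[of x "-z" y] cinner_minus_left[of z y] by simp

lemma Re_cinner_commute: "Re (cinner x (y::'a::complex_inner)) = Re (cinner y x)"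
  by (subst cinner_commute) simp

lemma Re_cinner_scaleR_right: "Re (cinner x (scaleR r y::'a::complex_inner)) = r * Re (cinner x y)"
  by (simp add: Re_cinner_commute[of x] cinner_scaleR_left)

lemma norm_sq_cinner: "(norm x)^2 = Re (cinner x (x::'a::complex_inner))"
  by (simp add: norm_eq_sqrt_cinner cinner_ge_zero)

lemma norm_add_sq: "(norm (x + y))^2 = (norm x)^2 + (norm y)^2 + 2 * Re (cinner x (y::'a::complex_inner))"
  by (simp add: norm_sq_cinner cinner_add_left cinner_add_right Re_cinner_commute[of y x])

lemma norm_diff_sq: "(norm (x - y))^2 = (norm x)^2 + (norm y)^2 - 2 * Re (cinner x (y::'a::complex_inner))"
proof -
  have "Re (cinner x (- y)) = - Re (cinner x y)"
    using Re_cinner_scaleR_right[of x "-1" y] by simp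
  then show ?thesis using norm_add_sq[of x "-y"] by simp
qed

lemma parallelogram: "(norm (x + y))^2 + (norm (x - y))^2 = 2 * (norm x)^2 + 2 * (norm (y::'a::complex_inner))^2"
  by (simp add: norm_add_sq norm_diff_sq)

lemma Re_cinner_CS: "\<bar>Re (cinner x (y::'a::complex_inner))\<bar> \<le> norm x * norm y"
proof (cases "y = 0")
  case True then show ?thesis by simp
next
  case False
  define r where "r = Re (cinner x y)"
  define s where "s = - r / (norm y)^2"
  have ny: "norm y > 0" using False by simp
  have "0 \<le> (norm (x + scaleR s y))^2" by simp
  also have "\<dots> = (norm x)^2 + s^2 * (norm y)^2 + 2 * s * r"
    by (simp add: norm_add_sq Re_cinner_scaleR_right r_def power_mult_distrib)
  also have "\<dots> = (norm x)^2 - r^2 / (norm y)^2"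
    using ny by (simp add: s_def field_simps power2_eq_square)
  finally have "r^2 \<le> (norm x)^2 * (norm y)^2" using ny by (simp add: field_simps)
  then have "r^2 \<le> (norm x * norm y)^2" by (simp add: power_mult_distrib)
  then show ?thesis unfolding r_def
    by (metis power2_abs power2_le_imp_le mult_nonneg_nonneg norm_ge_zero)
qed




locale specm = fixes E :: "real set \<Rightarrow> 'a::complex_inner \<Rightarrow> 'a"
  assumes sm: "spectral_measure E"
begin

lemma E_lin: "B \<in> sets borel \<Longrightarrow> clinear_map (E B)"
  using sm unfolding spectral_measure_def by blast
lemma E_add: "B \<in> sets borel \<Longrightarrow> E B (x + y) = E B x + E B y"
  using E_lin unfolding clinear_map_def by blast
lemma E_scaleC: "B \<in> sets borel \<Longrightarrow> E B (c *\<^sub>C x) = c *\<^sub>C E B x"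
  using E_lin unfolding clinear_map_def by blast
lemma E_scaleR: "B \<in> sets borel \<Longrightarrow> E B (r *\<^sub>R x) = r *\<^sub>R E B x"
  by (simp add: scaleR_scaleC E_scaleC)
lemma E_zero: "B \<in> sets borel \<Longrightarrow> E B 0 = 0"
  using E_scaleR[of B 0 0] by simp
lemma E_minus: "B \<in> sets borel \<Longrightarrow> E B (- x) = - E B x"
  using E_scaleR[of B "-1" x] by simp
lemma E_diff: "B \<in> sets borel \<Longrightarrow> E B (x - y) = E B x - E B y"
  using E_add[of B x "-y"] E_minus[of B y] by simp
lemma E_idem: "B \<in> sets borel \<Longrightarrow> E B (E B x) = E B x"
  using sm unfolding spectral_measure_def by blast
lemma E_sa: "B \<in> sets borel \<Longrightarrow> cinner (E B x) y = cinner x (E B y)"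
  using sm unfolding spectral_measure_def by blast
lemma E_UNIV: "E UNIV x = x"
  using sm unfolding spectral_measure_def by blast
lemma E_inter: "B \<in> sets borel \<Longrightarrow> C \<in> sets borel \<Longrightarrow> E (B \<inter> C) x = E B (E C x)"
  using sm unfolding spectral_measure_def by blast
lemma E_ca: "range F \<subseteq> sets borel \<Longrightarrow> disjoint_family F \<Longrightarrow>
        (\<lambda>n. \<Sum>k<n. E (F k) x) \<longlonglongrightarrow> E (\<Union>(range F)) x"
  using sm unfolding spectral_measure_def by blast

lemma E_empty: "E {} x = 0"
proof -
  let ?s = "\<lambda>n. \<Sum>k<n. E ({}::real set) x"
  have "?s \<longlonglongrightarrow> E {} x"
    using E_ca[of "\<lambda>_. {}" x] by (simp add: disjoint_family_on_def)
  then have "(\<lambda>n. ?s (Suc n) - ?s n) \<longlonglongrightarrow> E {} x - E {} x"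
    by (intro tendsto_diff LIMSEQ_Suc)
  then show ?thesis by (simp add: LIMSEQ_const_iff del: sum_constant)
qed

lemma E_orth: "B \<in> sets borel \<Longrightarrow> C \<in> sets borel \<Longrightarrow> B \<inter> C = {} \<Longrightarrow> cinner (E B x) (E C y) = 0"
proof -
  assume B: "B \<in> sets borel" and C: "C \<in> sets borel" and d: "B \<inter> C = {}"
  have "cinner (E B x) (E C y) = cinner (E C (E B x)) y" using E_sa[OF C] by simp
  also have "\<dots> = cinner (E (C \<inter> B) x) y" using E_inter[OF C B] by simp
  also have "C \<inter> B = {}" using d by blast
  finally show ?thesis by (simp add: E_empty)
qed

lemma cinner_sum_left: "cinner (\<Sum>k\<in>A. f k) y = (\<Sum>k\<in>A. cinner (f k) y)"
proof (cases "finite A")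
  case True then show ?thesis by (induct rule: finite_induct) (auto simp: cinner_add_left)
qed simp

lemma pyth_sum:
  assumes "\<And>j k. j \<noteq> k \<Longrightarrow> Re (cinner (f j) (f k)) = 0"
  shows "(norm (\<Sum>k<(n::nat). f k))^2 = (\<Sum>k<n. (norm (f k))^2)"
proof (induction n)
  case 0 then show ?case by simp
next
  case (Suc n)
  have "Re (cinner (\<Sum>k<n. f k) (f n)) = (\<Sum>k<n. Re (cinner (f k) (f n)))"
    by (simp add: cinner_sum_left)
  also have "\<dots> = 0" using assms by simp
  finally show ?case using Suc by (simp add: norm_add_sq)
qed

definition nu where "nu x = spectral_dist E x"

lemma sets_nu[simp, measurable_cong]: "sets (nu x) = sets borel"
  unfolding nu_def spectral_dist_def
  by (metis sets.sigma_sets_eq sets_measure_of sets.space_closed space_borel)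

lemma space_nu[simp]: "space (nu x) = UNIV"
  using sets_eq_imp_space_eq[OF sets_nu[of x]] by simp

lemma emeasure_nu: "C \<in> sets borel \<Longrightarrow> emeasure (nu x) C = ennreal ((norm (E C x))^2)"
  unfolding nu_def spectral_dist_def
proof (rule emeasure_measure_of_sigma)
  show "sigma_algebra UNIV (sets borel)"
    using sets.sigma_algebra_axioms[of borel] by simp
  show "positive (sets borel) (\<lambda>B. ennreal ((norm (E B x))\<^sup>2))"
    by (simp add: positive_def E_empty)
  show "countably_additive (sets borel) (\<lambda>B. ennreal ((norm (E B x))\<^sup>2))"
    unfolding countably_additive_def
  proof (intro allI impI)
    fix F :: "nat \<Rightarrow> real set"
    assume F: "range F \<subseteq> sets borel" and d: "disjoint_family F"
    have orth: "Re (cinner (E (F j) x) (E (F k) x)) = 0" if "j \<noteq> k" for j k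
      using E_orth[of "F j" "F k" x x] F d that unfolding disjoint_family_on_def by auto
    have "(\<lambda>n. (norm (\<Sum>k<n. E (F k) x))^2) \<longlonglongrightarrow> (norm (E (\<Union>(range F)) x))^2"
      by (intro tendsto_intros E_ca F d)
    then have "(\<lambda>i. (norm (E (F i) x))^2) sums (norm (E (\<Union>(range F)) x))^2"
      unfolding sums_def using pyth_sum[of "\<lambda>k. E (F k) x", OF orth] by simp
    then show "(\<Sum>i. ennreal ((norm (E (F i) x))\<^sup>2)) = ennreal ((norm (E (\<Union> (range F)) x))\<^sup>2)"
      by (intro suminf_ennreal_eq) auto
  qed
qed

lemma emeasure_nu_UNIV: "emeasure (nu x) UNIV = ennreal ((norm x)^2)"
  using emeasure_nu[of UNIV x] by (simp add: E_UNIV)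

lemma finite_nu: "finite_measure (nu x)"
  by (rule finite_measureI) (simp add: emeasure_nu_UNIV)

end



lemma nn_lin:
  fixes M1 M2 M3 M4 :: "real measure" and a1 a2 a3 a4 :: ennreal
  assumes s1: "sets M1 = sets borel" and s2: "sets M2 = sets borel"
    and s3: "sets M3 = sets borel" and s4: "sets M4 = sets borel"
    and eq: "\<And>C. C \<in> sets borel \<Longrightarrow> a1 * emeasure M1 C + a2 * emeasure M2 C = a3 * emeasure M3 C + a4 * emeasure M4 C"
    and g: "g \<in> borel_measurable borel"
  shows "a1 * (\<integral>\<^sup>+x. g x \<partial>M1) + a2 * (\<integral>\<^sup>+x. g x \<partial>M2) = a3 * (\<integral>\<^sup>+x. g x \<partial>M3) + a4 * (\<integral>\<^sup>+x. g x \<partial>M4)"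
  using g
proof (induct rule: borel_measurable_induct)
  case (cong f g)
  then have "f = g" by auto
  then show ?case using cong by simp
next
  case (set A)
  then show ?case using s1 s2 s3 s4 eq by simp
next
  case (mult u c)
  have m: "u \<in> borel_measurable M1" "u \<in> borel_measurable M2" "u \<in> borel_measurable M3" "u \<in> borel_measurable M4"
    using mult(2) s1 s2 s3 s4 by (auto simp: measurable_def)
  have "a1 * integral\<^sup>N M1 (\<lambda>x. c * u x) + a2 * integral\<^sup>N M2 (\<lambda>x. c * u x)
      = c * (a1 * integral\<^sup>N M1 u + a2 * integral\<^sup>N M2 u)"
    by (simp add: nn_integral_cmult[OF m(1)] nn_integral_cmult[OF m(2)] distrib_left mult_ac)
  also have "\<dots> = c * (a3 * integral\<^sup>N M3 u + a4 * integral\<^sup>N M4 u)" using mult(4) by simp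
  also have "\<dots> = a3 * integral\<^sup>N M3 (\<lambda>x. c * u x) + a4 * integral\<^sup>N M4 (\<lambda>x. c * u x)"
    by (simp add: nn_integral_cmult[OF m(3)] nn_integral_cmult[OF m(4)] distrib_left mult_ac)
  finally show ?case .
next
  case (add u v)
  have m: "u \<in> borel_measurable M1" "u \<in> borel_measurable M2" "u \<in> borel_measurable M3" "u \<in> borel_measurable M4"
    "v \<in> borel_measurable M1" "v \<in> borel_measurable M2" "v \<in> borel_measurable M3" "v \<in> borel_measurable M4"
    using add(1) add(4) s1 s2 s3 s4 by (auto simp: measurable_def)
  have "a1 * integral\<^sup>N M1 (\<lambda>x. v x + u x) + a2 * integral\<^sup>N M2 (\<lambda>x. v x + u x)
      = (a1 * integral\<^sup>N M1 v + a2 * integral\<^sup>N M2 v) + (a1 * integral\<^sup>N M1 u + a2 * integral\<^sup>N M2 u)"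
    using m by (simp add: nn_integral_add distrib_left add_ac)
  also have "\<dots> = (a3 * integral\<^sup>N M3 v + a4 * integral\<^sup>N M4 v) + (a3 * integral\<^sup>N M3 u + a4 * integral\<^sup>N M4 u)"
    using add(3) add(7) by simp
  also have "\<dots> = a3 * integral\<^sup>N M3 (\<lambda>x. v x + u x) + a4 * integral\<^sup>N M4 (\<lambda>x. v x + u x)"
    using m by (simp add: nn_integral_add distrib_left add_ac)
  finally show ?case .
next
  case (seq U)
  have m: "\<And>i. U i \<in> borel_measurable M1" "\<And>i. U i \<in> borel_measurable M2" "\<And>i. U i \<in> borel_measurable M3" "\<And>i. U i \<in> borel_measurable M4"
    using seq(1) s1 s2 s3 s4 by (auto simp: measurable_def)
  have inc: "incseq (\<lambda>i. a * integral\<^sup>N M (U i))" if "\<And>i. U i \<in> borel_measurable M" for a M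
    using seq(4) by (auto simp: incseq_def le_fun_def intro!: mult_left_mono nn_integral_mono)
  have "a * (\<integral>\<^sup>+x. (SUP i. U i) x \<partial>M) = (SUP i. a * integral\<^sup>N M (U i))" if "\<And>i. U i \<in> borel_measurable M" for a M
    using nn_integral_monotone_convergence_SUP[OF seq(4) that]
    by (simp add: SUP_mult_left_ennreal image_image)
  note X = this[OF m(1)] this[OF m(2)] this[OF m(3)] this[OF m(4)]
  show ?case
    unfolding X ennreal_SUP_add[OF inc[OF m(1)] inc[OF m(2)], symmetric]
      ennreal_SUP_add[OF inc[OF m(3)] inc[OF m(4)], symmetric]
    using seq(3) by simp
qed

lemma aux_fin: "ennreal a * x + ennreal b * y = ennreal r \<Longrightarrow> a > 0 \<Longrightarrow> x < top"
  using top.not_eq_extremum by fastforce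
lemma aux_fin2: "ennreal a * x + ennreal b * y = ennreal r \<Longrightarrow> b > 0 \<Longrightarrow> y < top"
  using top.not_eq_extremum by fastforce

lemma int_lin:
  fixes M1 M2 M3 M4 :: "real measure" and a1 a2 a3 a4 :: real
  assumes s1: "sets M1 = sets borel" and s2: "sets M2 = sets borel"
    and s3: "sets M3 = sets borel" and s4: "sets M4 = sets borel"
    and a: "a1 \<ge> 0" "a2 \<ge> 0" "a3 > 0" "a4 > 0"
    and eq: "\<And>C. C \<in> sets borel \<Longrightarrow> a1 * emeasure M1 C + a2 * emeasure M2 C = a3 * emeasure M3 C + a4 * emeasure M4 C"
    and i1: "integrable M1 f" and i2: "integrable M2 f"
    and f: "f \<in> borel_measurable borel"
  shows "integrable M3 f" "integrable M4 f"
    "a1 * integral\<^sup>L M1 f + a2 * integral\<^sup>L M2 f = a3 * integral\<^sup>L M3 f + a4 * integral\<^sup>L M4 f"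
proof -
  have eq': "\<And>C. C \<in> sets borel \<Longrightarrow> ennreal a1 * emeasure M1 C + ennreal a2 * emeasure M2 C = ennreal a3 * emeasure M3 C + ennreal a4 * emeasure M4 C"
    using eq by simp
  have fp: "(\<lambda>x. ennreal (f x)) \<in> borel_measurable borel" and fm: "(\<lambda>x. ennreal (- f x)) \<in> borel_measurable borel"
    using f by auto
  note P = nn_lin[OF s1 s2 s3 s4 eq' fp] and N = nn_lin[OF s1 s2 s3 s4 eq' fm]
  have m: "f \<in> borel_measurable M3" "f \<in> borel_measurable M4"
    using f s3 s4 by (auto simp: measurable_def)
  obtain p1 q1 where 1: "(\<integral>\<^sup>+x. ennreal (f x) \<partial>M1) = ennreal p1" "(\<integral>\<^sup>+x. ennreal (- f x) \<partial>M1) = ennreal q1"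
    "integral\<^sup>L M1 f = p1 - q1" "p1 \<ge> 0" "q1 \<ge> 0"
    using integrableE[OF i1] by metis
  obtain p2 q2 where 2: "(\<integral>\<^sup>+x. ennreal (f x) \<partial>M2) = ennreal p2" "(\<integral>\<^sup>+x. ennreal (- f x) \<partial>M2) = ennreal q2"
    "integral\<^sup>L M2 f = p2 - q2" "p2 \<ge> 0" "q2 \<ge> 0"
    using integrableE[OF i2] by metis
  have fin: "(\<integral>\<^sup>+x. ennreal (f x) \<partial>M3) < \<infinity>" "(\<integral>\<^sup>+x. ennreal (f x) \<partial>M4) < \<infinity>"
    "(\<integral>\<^sup>+x. ennreal (- f x) \<partial>M3) < \<infinity>" "(\<integral>\<^sup>+x. ennreal (- f x) \<partial>M4) < \<infinity>"
  proof -
    have "ennreal a3 * (\<integral>\<^sup>+x. ennreal (f x) \<partial>M3) + ennreal a4 * (\<integral>\<^sup>+x. ennreal (f x) \<partial>M4) = ennreal (a1 * p1 + a2 * p2)"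
      using P 1 2 a by (simp add: ennreal_mult)
    moreover have "ennreal a3 * (\<integral>\<^sup>+x. ennreal (- f x) \<partial>M3) + ennreal a4 * (\<integral>\<^sup>+x. ennreal (- f x) \<partial>M4) = ennreal (a1 * q1 + a2 * q2)"
      using N 1 2 a by (simp add: ennreal_mult)
    ultimately show "(\<integral>\<^sup>+x. ennreal (f x) \<partial>M3) < \<infinity>" "(\<integral>\<^sup>+x. ennreal (f x) \<partial>M4) < \<infinity>"
      "(\<integral>\<^sup>+x. ennreal (- f x) \<partial>M3) < \<infinity>" "(\<integral>\<^sup>+x. ennreal (- f x) \<partial>M4) < \<infinity>"
      using aux_fin aux_fin2 a by auto
  qed
  show i3: "integrable M3 f" "integrable M4 f"
    using fin m by (auto simp: real_integrable_def)
  obtain p3 q3 where 3: "(\<integral>\<^sup>+x. ennreal (f x) \<partial>M3) = ennreal p3" "(\<integral>\<^sup>+x. ennreal (- f x) \<partial>M3) = ennreal q3"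
    "integral\<^sup>L M3 f = p3 - q3" "p3 \<ge> 0" "q3 \<ge> 0"
    using integrableE[OF i3(1)] by metis
  obtain p4 q4 where 4: "(\<integral>\<^sup>+x. ennreal (f x) \<partial>M4) = ennreal p4" "(\<integral>\<^sup>+x. ennreal (- f x) \<partial>M4) = ennreal q4"
    "integral\<^sup>L M4 f = p4 - q4" "p4 \<ge> 0" "q4 \<ge> 0"
    using integrableE[OF i3(2)] by metis
  have "a1 * p1 + a2 * p2 = a3 * p3 + a4 * p4"
  proof -
    have "ennreal (a1 * p1 + a2 * p2) = ennreal (a3 * p3 + a4 * p4)"
      using P unfolding 1 2 3 4 using a 1 2 3 4 by (simp add: ennreal_mult)
    then show ?thesis using a 1 2 3 4 by (subst (asm) ennreal_inj) auto
  qed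
  moreover have "a1 * q1 + a2 * q2 = a3 * q3 + a4 * q4"
  proof -
    have "ennreal (a1 * q1 + a2 * q2) = ennreal (a3 * q3 + a4 * q4)"
      using N unfolding 1 2 3 4 using a 1 2 3 4 by (simp add: ennreal_mult)
    then show ?thesis using a 1 2 3 4 by (subst (asm) ennreal_inj) auto
  qed
  ultimately show "a1 * integral\<^sup>L M1 f + a2 * integral\<^sup>L M2 f = a3 * integral\<^sup>L M3 f + a4 * integral\<^sup>L M4 f"
    unfolding 1 2 3 4 by (simp add: algebra_simps)
qed




context specm begin

abbreviation "FD \<equiv> spectral_form_dom E"
abbreviation "sf \<equiv> spectral_form E"

lemma FD_iff: "x \<in> FD \<longleftrightarrow> integrable (nu x) (\<lambda>\<mu>. \<mu>)"
  by (simp add: spectral_form_dom_def nu_def)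

lemma sf_eq: "sf x = (\<integral>\<mu>. \<mu> \<partial>nu x)"
  by (simp add: spectral_form_def nu_def)

lemma ennreal_lin2: "p \<ge> 0 \<Longrightarrow> q \<ge> 0 \<Longrightarrow> r \<ge> 0 \<Longrightarrow> s \<ge> 0 \<Longrightarrow> a * p + b * q = c * r + d * s \<Longrightarrow>
   a \<ge> 0 \<Longrightarrow> b \<ge> 0 \<Longrightarrow> c \<ge> 0 \<Longrightarrow> d \<ge> 0 \<Longrightarrow>
   ennreal a * ennreal p + ennreal b * ennreal q = ennreal c * ennreal r + ennreal d * ennreal (s::real)"
  by (simp add: ennreal_mult[symmetric] ennreal_plus[symmetric] del: ennreal_plus)

lemma para:
  assumes x: "x \<in> FD" and y: "y \<in> FD"
  shows "x + y \<in> FD" "x - y \<in> FD" "2 * sf x + 2 * sf y = 1 * sf (x + y) + 1 * sf (x - y)"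
proof -
  have eq: "ennreal 2 * emeasure (nu x) C + ennreal 2 * emeasure (nu y) C
      = ennreal 1 * emeasure (nu (x + y)) C + ennreal 1 * emeasure (nu (x - y)) C" if C: "C \<in> sets borel" for C
  proof -
    have "2 * (norm (E C x))^2 + 2 * (norm (E C y))^2 = 1 * (norm (E C (x + y)))^2 + 1 * (norm (E C (x - y)))^2"
      using parallelogram[of "E C x" "E C y"] by (simp add: E_add[OF C] E_diff[OF C])
    from ennreal_lin2[OF _ _ _ _ this] show ?thesis unfolding emeasure_nu[OF C] by simp
  qed
  have i: "integrable (nu x) (\<lambda>\<mu>. \<mu>)" "integrable (nu y) (\<lambda>\<mu>. \<mu>)" using x y by (simp_all add: FD_iff)
  have m: "(\<lambda>\<mu>::real. \<mu>) \<in> borel_measurable borel" by simp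
  note L = int_lin[of "nu x" "nu y" "nu (x + y)" "nu (x - y)" 2 2 1 1 "\<lambda>\<mu>. \<mu>",
     OF sets_nu sets_nu sets_nu sets_nu _ _ _ _ eq i m]
  have L1: "integrable (nu (x + y)) (\<lambda>\<mu>. \<mu>)" "integrable (nu (x - y)) (\<lambda>\<mu>. \<mu>)"
    "2 * integral\<^sup>L (nu x) (\<lambda>\<mu>. \<mu>) + 2 * integral\<^sup>L (nu y) (\<lambda>\<mu>. \<mu>) = 1 * integral\<^sup>L (nu (x + y)) (\<lambda>\<mu>. \<mu>) + 1 * integral\<^sup>L (nu (x - y)) (\<lambda>\<mu>. \<mu>)"
    by (rule L; simp)+
  show "x + y \<in> FD" "x - y \<in> FD" using L1(1,2) by (simp_all add: FD_iff)
  show "2 * sf x + 2 * sf y = 1 * sf (x + y) + 1 * sf (x - y)" using L1(3) by (simp only: sf_eq)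
qed

lemma zero_FD: assumes "u \<in> FD" shows "0 \<in> FD" "sf 0 = 0"
proof -
  show z: "0 \<in> FD" using para(2)[OF assms assms] by simp
  show "sf 0 = 0" using para(3)[OF z z] by simp
qed

lemma nu_restrict: assumes B: "B \<in> sets borel"
  shows "nu (E B x) = density (nu x) (\<lambda>\<mu>. ennreal (indicator B \<mu>))"
proof (rule measure_eqI)
  show "sets (nu (E B x)) = sets (density (nu x) (\<lambda>\<mu>. ennreal (indicator B \<mu>)))" by simp
  fix C assume "C \<in> sets (nu (E B x))"
  then have C: "C \<in> sets borel" by simp
  have "emeasure (nu (E B x)) C = ennreal ((norm (E (C \<inter> B) x))^2)"
    using C B by (simp add: emeasure_nu E_inter)
  also have "\<dots> = emeasure (nu x) (C \<inter> B)" using C B by (simp add: emeasure_nu)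
  also have "\<dots> = (\<integral>\<^sup>+\<mu>. indicator (C \<inter> B) \<mu> \<partial>nu x)" using C B by simp
  also have "\<dots> = (\<integral>\<^sup>+\<mu>. ennreal (indicator B \<mu>) * indicator C \<mu> \<partial>nu x)"
    by (intro nn_integral_cong) (auto split: split_indicator)
  also have "\<dots> = emeasure (density (nu x) (\<lambda>\<mu>. ennreal (indicator B \<mu>))) C"
    using B C by (subst emeasure_density) auto
  finally show "emeasure (nu (E B x)) C = emeasure (density (nu x) (\<lambda>\<mu>. ennreal (indicator B \<mu>))) C" .
qed

lemma sf_restrict: assumes B: "B \<in> sets borel" and x: "x \<in> FD"
  shows "E B x \<in> FD" "sf (E B x) = (\<integral>\<mu>. indicator B \<mu> * \<mu> \<partial>nu x)"
proof -
  have m: "(\<lambda>\<mu>::real. \<mu>) \<in> borel_measurable (nu x)" "(\<lambda>\<mu>. indicator B \<mu> :: real) \<in> borel_measurable (nu x)"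
    using B by auto
  have i: "integrable (nu x) (\<lambda>\<mu>. indicator B \<mu> *\<^sub>R \<mu>)"
    using integrable_mult_indicator[of B "nu x" "\<lambda>\<mu>. \<mu>"] x B by (simp add: FD_iff)
  show "E B x \<in> FD"
    unfolding FD_iff nu_restrict[OF B] using integrable_density[OF m] i by simp
  show "sf (E B x) = (\<integral>\<mu>. indicator B \<mu> * \<mu> \<partial>nu x)"
    unfolding sf_eq nu_restrict[OF B] using integral_density[OF m(1) m(2)] by simp
qed

lemma sf_split: assumes B: "B \<in> sets borel" and x: "x \<in> FD"
  shows "sf x = sf (E B x) + sf (E (- B) x)"
proof -
  have B': "- B \<in> sets borel" using B by auto
  have i: "integrable (nu x) (\<lambda>\<mu>. indicator A \<mu> * \<mu>)" if "A \<in> sets borel" for A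
    using integrable_mult_indicator[of A "nu x" "\<lambda>\<mu>. \<mu>"] x that by (simp add: FD_iff)
  have "sf (E B x) + sf (E (- B) x) = (\<integral>\<mu>. indicator B \<mu> * \<mu> + indicator (- B) \<mu> * \<mu> \<partial>nu x)"
    using sf_restrict(2)[OF B x] sf_restrict(2)[OF B' x] i[OF B] i[OF B'] by simp
  also have "\<dots> = (\<integral>\<mu>. \<mu> \<partial>nu x)"
    by (intro Bochner_Integration.integral_cong) (auto split: split_indicator)
  finally show ?thesis by (simp add: sf_eq)
qed

lemma sf_tail: assumes x: "x \<in> FD"
  shows "(\<lambda>n::nat. sf (E (- {- real n..real n}) x)) \<longlonglongrightarrow> 0"
proof -
  have B: "- {- real n..real n} \<in> sets borel" for n by auto
  have "(\<lambda>n::nat. \<integral>\<mu>. indicator (- {- real n..real n}) \<mu> * \<mu> \<partial>nu x) \<longlonglongrightarrow> (\<integral>\<mu>. 0 \<partial>nu x)"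
  proof (rule integral_dominated_convergence[where w="\<lambda>\<mu>. \<bar>\<mu>\<bar>"])
    show "integrable (nu x) (\<lambda>\<mu>. \<bar>\<mu>\<bar>)" using x by (simp add: FD_iff)
    show "AE \<mu> in nu x. (\<lambda>n. indicator (- {- real n..real n}) \<mu> * \<mu>) \<longlonglongrightarrow> 0"
    proof (rule AE_I2)
      fix \<mu> :: real
      obtain N :: nat where N: "\<bar>\<mu>\<bar> \<le> real N" using real_arch_simple by blast
      have "eventually (\<lambda>n. indicator (- {- real n..real n}) \<mu> * \<mu> = 0) sequentially"
        unfolding eventually_sequentially
        by (rule exI[of _ N]) (use N in \<open>auto split: split_indicator\<close>)
      then show "(\<lambda>n. indicator (- {- real n..real n}) \<mu> * \<mu>) \<longlonglongrightarrow> 0"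
        by (rule tendsto_eventually)
    qed
    show "AE \<mu> in nu x. norm (indicator (- {- real n..real n}) \<mu> * \<mu>) \<le> \<bar>\<mu>\<bar>" for n
      by (rule AE_I2) (auto split: split_indicator)
  qed auto
  then show ?thesis using sf_restrict(2)[OF B x] by simp
qed

abbreviation "OD \<equiv> spectral_op_dom E"

lemma OD_iff: "x \<in> OD \<longleftrightarrow> (\<integral>\<^sup>+\<mu>. ennreal (\<mu>\<^sup>2) \<partial>nu x) < \<infinity>"
  by (simp add: spectral_op_dom_def nu_def)

lemma abs_le_1_sq: "\<bar>\<mu>::real\<bar> \<le> 1 + \<mu>\<^sup>2"
proof (cases "\<bar>\<mu>\<bar> \<le> 1")
  case True
  have "0 \<le> \<mu>\<^sup>2" by simp
  then show ?thesis using True by linarith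
next
  case False
  then have "\<bar>\<mu>\<bar> * 1 \<le> \<bar>\<mu>\<bar> * \<bar>\<mu>\<bar>" by (intro mult_left_mono) auto
  moreover have "\<bar>\<mu>\<bar> * \<bar>\<mu>\<bar> = \<mu>\<^sup>2" by (simp add: power2_eq_square abs_mult_self_eq)
  ultimately show ?thesis by linarith
qed
lemma OD_FD: assumes "x \<in> OD" shows "x \<in> FD"
proof -
  have fin: "(\<integral>\<^sup>+\<mu>. ennreal (\<mu>\<^sup>2) \<partial>nu x) < \<infinity>" using assms by (simp add: OD_iff)
  have "(\<integral>\<^sup>+\<mu>. ennreal (norm \<mu>) \<partial>nu x) \<le> (\<integral>\<^sup>+\<mu>. ennreal 1 + ennreal (\<mu>\<^sup>2) \<partial>nu x)"
  proof (intro nn_integral_mono)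
    fix \<mu> :: real
    have "ennreal (norm \<mu>) \<le> ennreal (1 + \<mu>\<^sup>2)" by (rule ennreal_leI) (use abs_le_1_sq[of \<mu>] in simp)
    also have "\<dots> = ennreal 1 + ennreal (\<mu>\<^sup>2)" by (rule ennreal_plus) auto
    finally show "ennreal (norm \<mu>) \<le> ennreal 1 + ennreal (\<mu>\<^sup>2)" .
  qed
  also have "\<dots> = (\<integral>\<^sup>+\<mu>. ennreal 1 \<partial>nu x) + (\<integral>\<^sup>+\<mu>. ennreal (\<mu>\<^sup>2) \<partial>nu x)"
    by (rule nn_integral_add) auto
  also have "(\<integral>\<^sup>+\<mu>. ennreal 1 \<partial>nu x) = ennreal ((norm x)^2)"
    by (simp add: emeasure_nu_UNIV)
  finally have "(\<integral>\<^sup>+\<mu>. ennreal (norm \<mu>) \<partial>nu x) < \<infinity>"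
    using fin by (simp add: order_le_less_trans)
  moreover have "(\<lambda>\<mu>::real. \<mu>) \<in> borel_measurable (nu x)" by simp
  ultimately show ?thesis unfolding FD_iff integrable_iff_bounded by blast
qed

lemma bounded_OD: assumes K: "K \<ge> 0" shows "E {-K..K} x \<in> OD"
proof -
  have B: "{-K..K} \<in> sets borel" by simp
  have "(\<integral>\<^sup>+\<mu>. ennreal (\<mu>\<^sup>2) \<partial>nu (E {-K..K} x)) = (\<integral>\<^sup>+\<mu>. ennreal (indicator {-K..K} \<mu>) * ennreal (\<mu>\<^sup>2) \<partial>nu x)"
    unfolding nu_restrict[OF B] by (subst nn_integral_density) auto
  also have "\<dots> \<le> (\<integral>\<^sup>+\<mu>. ennreal (K\<^sup>2) \<partial>nu x)"
  proof (intro nn_integral_mono)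
    fix \<mu> :: real
    have "\<mu>\<^sup>2 \<le> K\<^sup>2" if "\<mu> \<in> {-K..K}"
    proof -
      have "\<bar>\<mu>\<bar> \<le> K" using that by auto
      then have "\<bar>\<mu>\<bar>\<^sup>2 \<le> K\<^sup>2" by (intro power_mono) auto
      then show ?thesis by simp
    qed
    then show "ennreal (indicator {-K..K} \<mu>) * ennreal (\<mu>\<^sup>2) \<le> ennreal (K\<^sup>2)"
      by (auto split: split_indicator)
  qed
  also have "\<dots> < \<infinity>" by (simp add: emeasure_nu_UNIV ennreal_mult_less_top flip: ennreal_mult)
  finally show ?thesis by (simp add: OD_iff)
qed

lemma norm_E_le: assumes B: "B \<in> sets borel" shows "norm (E B x) \<le> norm x"
proof -
  have "emeasure (nu x) B \<le> emeasure (nu x) UNIV" by (intro emeasure_mono) auto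
  then have "(norm (E B x))^2 \<le> (norm x)^2" using B by (simp add: emeasure_nu emeasure_nu_UNIV)
  then show ?thesis by (simp add: power_mono_iff)
qed

lemma E_compl_E: assumes B: "B \<in> sets borel" shows "E (- B) (E B x) = 0"
proof -
  have "E (- B) (E B x) = E (- B \<inter> B) x" using E_inter[of "- B" B x] B by auto
  moreover have "- B \<inter> B = {}" by auto
  ultimately show ?thesis by (simp add: E_empty)
qed

lemma Re_polar:
  assumes T: "spectral_operator E domA T" and x: "x \<in> OD" and y: "y \<in> OD"
  shows "Re (cinner (T x) y) = (sf (x + y) - sf (x - y)) / 4"
proof -
  have xy: "x \<in> domA" "y \<in> domA" using T x y by (auto simp: spectral_operator_def)
  have m1: "(-1) *\<^sub>C y = - y" using scaleR_scaleC[of "-1" y] by simp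
  have "cinner (T x) y = (\<Sum>k<4::nat. \<i> ^ k * complex_of_real (sf (x + (\<i> ^ k) *\<^sub>C y))) / 4"
    using T xy unfolding spectral_operator_def by blast
  then have "cinner (T x) y * 4 = complex_of_real (sf (x + y)) + \<i> * complex_of_real (sf (x + \<i> *\<^sub>C y)) -
     complex_of_real (sf (x - y)) - \<i> * complex_of_real (sf (x + - \<i> *\<^sub>C y))"
    by (simp add: numeral_eq_Suc scaleC_one m1 flip: diff_conv_add_uminus)
  then have "Re (cinner (T x) y * 4) = Re (complex_of_real (sf (x + y)) + \<i> * complex_of_real (sf (x + \<i> *\<^sub>C y)) -
     complex_of_real (sf (x - y)) - \<i> * complex_of_real (sf (x + - \<i> *\<^sub>C y)))" by simp
  then show ?thesis by simp

qed

end



lemma ode: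
  fixes f f' :: "real \<Rightarrow> real"
  assumes m: "m1 < m2"
    and cont: "continuous_on {m1..m2} f"
    and der: "\<And>l. l \<in> {m1..m2} \<Longrightarrow> (f has_real_derivative f' l) (at l within {m1..m2})"
    and neg: "\<And>l. m1 < l \<Longrightarrow> l \<le> m2 \<Longrightarrow> f l < 0"
    and bnd: "\<And>l. l \<in> {m1..m2} \<Longrightarrow> \<bar>f l\<bar> \<le> e \<Longrightarrow> f' l \<le> - d"
    and f1: "f m1 \<le> 0" and C: "C \<le> e" "C \<le> d * (m2 - m1)" "0 \<le> C"
  shows "f m2 \<le> - C"
proof (rule ccontr)
  assume nc: "\<not> f m2 \<le> - C"
  define k where "k = C / (m2 - m1)"
  define h where "h l = f l + k * (l - m1)" for l
  have km: "k * (m2 - m1) = C" using m by (simp add: k_def)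
  have k0: "k \<ge> 0" using m C by (simp add: k_def)
  have kd: "k \<le> d" using m C(2) by (simp add: k_def pos_divide_le_eq)
  have hm2: "h m2 > 0" using nc km by (simp add: h_def)
  have hcont: "continuous_on {m1..m2} h" unfolding h_def by (intro continuous_intros cont)
  define S where "S = {m1..m2} \<inter> h -` {..0}"
  have clS: "closed S" unfolding S_def by (rule continuous_closed_preimage[OF hcont]) auto
  have m1S: "m1 \<in> S" using m f1 by (simp add: S_def h_def)
  have bS: "bdd_above S" unfolding S_def by (rule bdd_aboveI[of _ m2]) auto
  define s where "s = Sup S"
  have sS: "s \<in> S" unfolding s_def using closed_contains_Sup[OF _ bS clS] m1S by auto
  have s1: "m1 \<le> s" "s \<le> m2" "h s \<le> 0" using sS by (auto simp: S_def)
  have s2: "s < m2" using s1 hm2 by (cases "s = m2") auto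
  have pos: "h l > 0" if "s < l" "l \<le> m2" for l
  proof (rule ccontr)
    assume "\<not> h l > 0"
    then have "l \<in> S" using that s1 by (auto simp: S_def)
    then have "l \<le> s" unfolding s_def by (rule cSup_upper[OF _ bS])
    then show False using that by simp
  qed
  have hder: "(h has_real_derivative (f' l + k)) (at l)" if "s < l" "l < m2" for l
  proof -
    have "l \<in> interior {m1..m2}" using that s1 by auto
    then have "(f has_real_derivative f' l) (at l)"
      using der[of l] that s1 at_within_interior[of l "{m1..m2}"] by auto
    then show ?thesis unfolding h_def by (auto intro!: derivative_eq_intros)
  qed
  have hder_le: "f' l + k \<le> 0" if "s < l" "l < m2" for l
  proof -
    have "h l > 0" using pos that by auto
    then have "f l > - k * (l - m1)" by (simp add: h_def)
    moreover have "k * (l - m1) \<le> k * (m2 - m1)" using k0 that by (intro mult_left_mono) auto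
    ultimately have "f l > - e" using km C by linarith
    moreover have "f l < 0" using neg[of l] that s1 by auto
    ultimately have "\<bar>f l\<bar> \<le> e" by auto
    then have "f' l \<le> - d" using bnd[of l] that s1 by auto
    then show ?thesis using kd by linarith
  qed
  have "continuous_on {s..m2} h" using s1 by (intro continuous_on_subset[OF hcont]) auto
  moreover have "h differentiable (at x)" if "s < x" "x < m2" for x
    using hder[OF that] real_differentiable_def by blast
  ultimately obtain l z where z: "s < z" "z < m2" "DERIV h z :> l" "h m2 - h s = (m2 - s) * l"
    using MVT[OF s2] by blast
  have "l = f' z + k" using DERIV_unique[OF z(3) hder[OF z(1,2)]] .
  then have "l \<le> 0" using hder_le z by auto
  then have "(m2 - s) * l \<le> 0" using s2 by (simp add: mult_nonneg_nonpos)
  then have "h m2 \<le> h s" using z(4) by linarith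
  then show False using s1 hm2 by linarith
qed





lemma arith_key: "R * 4 = A - D \<Longrightarrow> 2 * sv + 2 * p = A + D \<Longrightarrow> - K \<le> R \<Longrightarrow> A = pw + qv
  \<Longrightarrow> w = pw + qw \<Longrightarrow> su = p + qu \<Longrightarrow> su + sv - 2 * K - qu - qv + qw \<le> (w::real)"
  by linarith

theorem lemma2p8:
  fixes \<Delta> :: "real set"
    and E :: "real \<Rightarrow> real set \<Rightarrow> 'a::{complex_inner, complete_space} \<Rightarrow> 'a"
    and domT :: "real \<Rightarrow> 'a set"
    and T :: "real \<Rightarrow> 'a \<Rightarrow> 'a"
    and t :: "real \<Rightarrow> 'a \<Rightarrow> real"
    and t' :: "real \<Rightarrow> 'a \<Rightarrow> real"
    and \<D> :: "'a set"
    and \<mu>\<^sub>1 \<mu>\<^sub>2 \<epsilon> \<delta> a b c :: real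
    and u v :: 'a
  assumes interval: "is_interval \<Delta>"
    and A1: "\<forall>l\<in>\<Delta>. spectral_operator (E l) (domT l) (T l)"
    and t_def: "\<forall>l\<in>\<Delta>. \<forall>x\<in>\<D>. t l x = spectral_form (E l) x"
    and A2: "\<forall>l\<in>\<Delta>. spectral_form_dom (E l) = \<D>"
    and A3: "\<forall>x\<in>\<D> - {0}. continuous_on \<Delta> (\<lambda>l. t l x) \<and>
               (\<forall>l\<^sub>0\<in>\<Delta>. t l\<^sub>0 x = 0 \<longrightarrow>
                  (\<forall>l\<in>\<Delta>. (l < l\<^sub>0 \<longrightarrow> t l x > 0) \<and> (l > l\<^sub>0 \<longrightarrow> t l x < 0)))"
    and VM_deriv: "\<forall>x\<in>\<D>. \<forall>l\<in>\<Delta>. ((\<lambda>s. t s x) has_real_derivative t' l x) (at l within \<Delta>)"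
    and VM_bound: "\<forall>p q. p \<le> q \<and> {p..q} \<subseteq> \<Delta> \<longrightarrow>
               (\<exists>\<epsilon>'>0. \<exists>\<delta>'>0. \<forall>x\<in>\<D>. \<forall>l\<in>{p..q}.
                  norm x = 1 \<and> \<bar>t l x\<bar> \<le> \<epsilon>' \<longrightarrow> t' l x \<le> - \<delta>')"
    and mu: "\<mu>\<^sub>1 \<in> \<Delta>" "\<mu>\<^sub>2 \<in> \<Delta>" "\<mu>\<^sub>1 < \<mu>\<^sub>2"
    and eps_delta: "\<epsilon> > 0" "\<delta> > 0"
    and eps_delta_prop: "\<forall>l\<in>{\<mu>\<^sub>1..\<mu>\<^sub>2}. \<forall>x\<in>\<D>.
               \<bar>t l x\<bar> \<le> \<epsilon> * (norm x)\<^sup>2 \<longrightarrow> t' l x \<le> - \<delta> * (norm x)\<^sup>2"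
    and ab: "a > 0" "b > 0"
    and c_def: "c = min \<epsilon> (\<delta> * (\<mu>\<^sub>2 - \<mu>\<^sub>1))"
    and abc: "a * c > b * (a + b + 3 * c)"
    and u: "u \<in> \<D>" "t \<mu>\<^sub>2 u \<ge> a * (norm u)\<^sup>2"
    and v: "v \<in> domT \<mu>\<^sub>2" "norm (T \<mu>\<^sub>2 v) \<le> b * norm v"
    and nz: "u \<noteq> 0 \<or> v \<noteq> 0"
  shows "t \<mu>\<^sub>1 (u + v) > 0"
proof -
  have Iv: "{\<mu>\<^sub>1..\<mu>\<^sub>2} \<subseteq> \<Delta>"
    using interval[unfolded is_interval_1, rule_format, OF mu(1) mu(2)] by auto
  have Top: "spectral_operator (E \<mu>\<^sub>2) (domT \<mu>\<^sub>2) (T \<mu>\<^sub>2)" by (rule bspec[OF A1 mu(2)])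
  interpret S: specm "E \<mu>\<^sub>2" using Top by (simp add: spectral_operator_def specm_def)
  have domT: "domT \<mu>\<^sub>2 = S.OD" using Top by (simp add: spectral_operator_def)
  have FDeq: "S.FD = \<D>" by (rule bspec[OF A2 mu(2)])
  have tt: "\<And>x. x \<in> \<D> \<Longrightarrow> t \<mu>\<^sub>2 x = S.sf x" using bspec[OF t_def mu(2)] by blast
  have vOD: "v \<in> S.OD" using v domT by simp
  have vD: "v \<in> S.FD" using S.OD_FD vOD by blast
  have uD: "u \<in> S.FD" using u FDeq by simp
  define X where "X = norm u"
  define Y where "Y = norm v"
  have X0: "X \<ge> 0" and Y0: "Y \<ge> 0" by (simp_all add: X_def Y_def)
  have CS: "\<bar>Re (cinner (T \<mu>\<^sub>2 v) y)\<bar> \<le> b * Y * norm y" for y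
  proof -
    have "\<bar>Re (cinner (T \<mu>\<^sub>2 v) y)\<bar> \<le> norm (T \<mu>\<^sub>2 v) * norm y" by (rule Re_cinner_CS)
    also have "\<dots> \<le> b * Y * norm y" using v(2) by (intro mult_right_mono) (auto simp: Y_def)
    finally show ?thesis .
  qed
  have z: "S.sf 0 = 0" using S.zero_FD[OF uD] by blast
  have sfv: "S.sf v \<ge> - b * Y^2"
  proof -
    have "Re (cinner (T \<mu>\<^sub>2 v) v) = (S.sf (v + v) - S.sf (v - v)) / 4" by (rule S.Re_polar[OF Top vOD vOD])
    moreover have "2 * S.sf v + 2 * S.sf v = 1 * S.sf (v + v) + 1 * S.sf (v - v)" by (rule S.para(3)[OF vD vD])
    ultimately have "Re (cinner (T \<mu>\<^sub>2 v) v) = S.sf v" using z by simp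
    moreover have "\<bar>Re (cinner (T \<mu>\<^sub>2 v) v)\<bar> \<le> b * Y * Y" using CS[of v] by (simp add: Y_def)
    ultimately show ?thesis by (simp add: power2_eq_square)
  qed
  have wD: "u + v \<in> S.FD" by (rule S.para(1)[OF uD vD])
  define B where "B n = {- real n..real n}" for n :: nat
  have Bb: "B n \<in> sets borel" "- B n \<in> sets borel" for n by (auto simp: B_def)
  have key: "S.sf (u + v) \<ge> S.sf u + S.sf v - 2 * b * X * Y - S.sf (E \<mu>\<^sub>2 (- B n) u)
      - S.sf (E \<mu>\<^sub>2 (- B n) v) + S.sf (E \<mu>\<^sub>2 (- B n) (u + v))" for n
  proof -
    let ?P = "E \<mu>\<^sub>2 (B n)" and ?Q = "E \<mu>\<^sub>2 (- B n)"
    have PuOD: "?P u \<in> S.OD" unfolding B_def by (rule S.bounded_OD) simp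
    have PuD: "?P u \<in> S.FD" using S.OD_FD[OF PuOD] .
    have pol: "Re (cinner (T \<mu>\<^sub>2 v) (?P u)) = (S.sf (v + ?P u) - S.sf (v - ?P u)) / 4"
      by (rule S.Re_polar[OF Top vOD PuOD])
    have par: "2 * S.sf v + 2 * S.sf (?P u) = 1 * S.sf (v + ?P u) + 1 * S.sf (v - ?P u)"
      by (rule S.para(3)[OF vD PuD])
    have vPuD: "v + ?P u \<in> S.FD" by (rule S.para(1)[OF vD PuD])
    have cs0: "\<bar>Re (cinner (T \<mu>\<^sub>2 v) (?P u))\<bar> \<le> b * Y * X"
    proof -
      have "\<bar>Re (cinner (T \<mu>\<^sub>2 v) (?P u))\<bar> \<le> b * Y * norm (?P u)" by (rule CS)
      also have "\<dots> \<le> b * Y * X" using ab Y0 S.norm_E_le[OF Bb(1)[of n], of u]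
        by (intro mult_left_mono) (auto simp: X_def)
      finally show ?thesis .
    qed
    have e1: "S.sf (v + ?P u) = S.sf (?P (v + ?P u)) + S.sf (?Q (v + ?P u))"
      by (rule S.sf_split[OF Bb(1)[of n] vPuD])
    have e2: "?P (v + ?P u) = ?P (u + v)"
      using Bb by (simp add: S.E_add S.E_idem add.commute)
    have e3: "?Q (v + ?P u) = ?Q v"
      using Bb S.E_compl_E[OF Bb(1)[of n], of u] by (simp add: S.E_add)
    have e4: "S.sf (u + v) = S.sf (?P (u + v)) + S.sf (?Q (u + v))"
      by (rule S.sf_split[OF Bb(1)[of n] wD])
    have e5: "S.sf u = S.sf (?P u) + S.sf (?Q u)"
      by (rule S.sf_split[OF Bb(1)[of n] uD])
    have cs: "Re (cinner (T \<mu>\<^sub>2 v) (?P u)) \<ge> - (b * X * Y)" using cs0 by (simp add: mult_ac abs_le_iff)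
    have e1': "S.sf (v + ?P u) = S.sf (?P (u + v)) + S.sf (?Q v)" using e1 e2 e3 by simp
    have m2: "2 * b * X * Y = 2 * (b * X * Y)" by simp
    have pol': "Re (cinner (T \<mu>\<^sub>2 v) (?P u)) * 4 = S.sf (v + ?P u) - S.sf (v - ?P u)" using pol by simp
    have par': "2 * S.sf v + 2 * S.sf (?P u) = S.sf (v + ?P u) + S.sf (v - ?P u)" using par by simp
    show ?thesis unfolding m2 by (rule arith_key[OF pol' par' cs e1' e4 e5])
  qed
  have lim: "(\<lambda>n. S.sf u + S.sf v - 2 * b * X * Y - S.sf (E \<mu>\<^sub>2 (- B n) u)
      - S.sf (E \<mu>\<^sub>2 (- B n) v) + S.sf (E \<mu>\<^sub>2 (- B n) (u + v)))
      \<longlonglongrightarrow> S.sf u + S.sf v - 2 * b * X * Y - 0 - 0 + 0"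
    unfolding B_def by (intro tendsto_intros S.sf_tail uD vD wD)
  have low: "S.sf u + S.sf v - 2 * b * X * Y \<le> S.sf (u + v)"
    using LIMSEQ_le_const2[OF lim] key by auto
  have wDD: "u + v \<in> \<D>" using wD FDeq by simp
  define L where "L = a * X^2 - 2 * b * X * Y - b * Y^2"
  have f2: "t \<mu>\<^sub>2 (u + v) \<ge> L"
    using low tt[OF wDD] tt[OF u(1)] u(2) sfv by (simp add: L_def X_def)
  have cpos: "c > 0" using eps_delta mu by (simp add: c_def)
  have cb: "c > b"
  proof -
    have "b * (a + b + 3 * c) \<ge> b * a" using ab cpos by (intro mult_left_mono) auto
    then have "a * c > a * b" using abc by (simp add: mult.commute)
    then show ?thesis using ab by simp
  qed
  have quad: "L + c * (X - Y)^2 > 0"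
  proof -
    define p where "p = a + c"
    define q where "q = b + c"
    define r where "r = c - b"
    have p0: "p > 0" using ab cpos by (simp add: p_def)
    have disc: "p * r - q^2 > 0" using abc by (simp add: p_def q_def r_def power2_eq_square algebra_simps)
    have id: "p * (L + c * (X - Y)^2) = (p * X - q * Y)^2 + (p * r - q^2) * Y^2"
      by (simp add: L_def p_def q_def r_def power2_eq_square algebra_simps)
    have "p * (L + c * (X - Y)^2) > 0"
    proof (cases "Y = 0")
      case True
      then have "v = 0" by (simp add: Y_def)
      then have "X > 0" using nz by (simp add: X_def)
      then show ?thesis using id True p0 by simp
    next
      case False
      then have "(p * r - q^2) * Y^2 > 0" using disc by simp
      moreover have "(p * X - q * Y)^2 \<ge> 0" by simp
      ultimately show ?thesis using id by linarith
    qed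
    then show ?thesis using p0 by (simp add: zero_less_mult_iff)
  qed
  have Nle: "(X - Y)^2 \<le> (norm (u + v))^2"
  proof -
    have "X - Y \<le> norm (u + v)" using norm_triangle_ineq2[of u "- v"] by (simp add: X_def Y_def)
    moreover have "Y - X \<le> norm (u + v)" using norm_triangle_ineq2[of v "- u"] by (simp add: X_def Y_def add.commute)
    ultimately have "\<bar>X - Y\<bar> \<le> norm (u + v)" by simp
    then have "\<bar>X - Y\<bar>^2 \<le> (norm (u + v))^2" by (intro power_mono) auto
    then show ?thesis by simp
  qed
  define N where "N = (norm (u + v))^2"
  have LN: "L > - c * N"
  proof -
    have "c * (X - Y)^2 \<le> c * N" using Nle cpos by (simp add: N_def)
    then show ?thesis using quad by simp
  qed
  have w0: "u + v \<noteq> 0"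
  proof
    assume "u + v = 0"
    then have "t \<mu>\<^sub>2 (u + v) = 0" using tt[OF wDD] z by simp
    moreover have "N = 0" using \<open>u + v = 0\<close> by (simp add: N_def)
    ultimately show False using f2 LN by simp
  qed
  have Npos: "N > 0" using w0 by (simp add: N_def)
  have A3w: "continuous_on \<Delta> (\<lambda>l. t l (u + v))"
    "\<And>l0 l. l0 \<in> \<Delta> \<Longrightarrow> t l0 (u + v) = 0 \<Longrightarrow> l \<in> \<Delta> \<Longrightarrow> l < l0 \<Longrightarrow> t l (u + v) > 0"
    "\<And>l0 l. l0 \<in> \<Delta> \<Longrightarrow> t l0 (u + v) = 0 \<Longrightarrow> l \<in> \<Delta> \<Longrightarrow> l > l0 \<Longrightarrow> t l (u + v) < 0"
    using A3 wDD w0 by blast+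
  show ?thesis
  proof (rule ccontr)
    assume "\<not> t \<mu>\<^sub>1 (u + v) > 0"
    then have f1: "t \<mu>\<^sub>1 (u + v) \<le> 0" by simp
    have cont: "continuous_on {\<mu>\<^sub>1..\<mu>\<^sub>2} (\<lambda>l. t l (u + v))" using A3w(1) Iv by (rule continuous_on_subset)
    have neg: "t l (u + v) < 0" if l: "\<mu>\<^sub>1 < l" "l \<le> \<mu>\<^sub>2" for l
    proof (cases "t \<mu>\<^sub>1 (u + v) = 0")
      case True
      have lD: "l \<in> \<Delta>" using l by (intro subsetD[OF Iv]) auto
      then show ?thesis using A3w(3)[of "\<mu>\<^sub>1" l] mu True l by auto
    next
      case False
      then have f1': "t \<mu>\<^sub>1 (u + v) < 0" using f1 by simp
      show ?thesis
      proof (rule ccontr)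
        assume "\<not> t l (u + v) < 0"
        then have "0 \<le> t l (u + v)" by simp
        moreover have "continuous_on {\<mu>\<^sub>1..l} (\<lambda>l. t l (u + v))"
          using l by (intro continuous_on_subset[OF cont]) auto
        ultimately obtain x where x: "\<mu>\<^sub>1 \<le> x" "x \<le> l" "t x (u + v) = 0"
          using IVT'[of "\<lambda>l. t l (u + v)" "\<mu>\<^sub>1" 0 l] f1 l by auto
        have "x \<noteq> \<mu>\<^sub>1" using x f1' by auto
        then have "\<mu>\<^sub>1 < x" using x by simp
        moreover have xD: "x \<in> \<Delta>" using x l by (intro subsetD[OF Iv]) auto
        ultimately have "t \<mu>\<^sub>1 (u + v) > 0" using A3w(2)[of x "\<mu>\<^sub>1"] x mu by auto
        then show False using f1' by simp
      qed
    qed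
    have der: "((\<lambda>l. t l (u + v)) has_real_derivative t' l (u + v)) (at l within {\<mu>\<^sub>1..\<mu>\<^sub>2})"
      if "l \<in> {\<mu>\<^sub>1..\<mu>\<^sub>2}" for l
      using VM_deriv wDD that Iv by (intro DERIV_subset[OF _ Iv]) auto
    have bnd: "t' l (u + v) \<le> - (\<delta> * N)" if "l \<in> {\<mu>\<^sub>1..\<mu>\<^sub>2}" "\<bar>t l (u + v)\<bar> \<le> \<epsilon> * N" for l
      using eps_delta_prop that wDD by (auto simp: N_def)
    have C1: "c * N \<le> \<epsilon> * N" using Npos by (intro mult_right_mono) (auto simp: c_def)
    have C2: "c * N \<le> (\<delta> * N) * (\<mu>\<^sub>2 - \<mu>\<^sub>1)"
    proof -
      have "c * N \<le> (\<delta> * (\<mu>\<^sub>2 - \<mu>\<^sub>1)) * N" using Npos by (intro mult_right_mono) (auto simp: c_def)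
      then show ?thesis by (simp add: algebra_simps)
    qed
    have "t \<mu>\<^sub>2 (u + v) \<le> - (c * N)"
      by (rule ode[OF mu(3) cont der neg bnd f1 C1 C2]) (use cpos Npos in auto)
    then show False using f2 LN by simp
  qed
qed


end
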